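(* Let $n\ge 1$ and let $\mathbf{P}_A,\mathbf{P}_B,\mathbf{Q}_A,\mathbf{Q}_B\in\mathbb{R}^{n\times n}$ be symmetric positive definite; put $\mathbf{C}_A=\mathbf{P}_A+\mathbf{Q}_A$, $\mathbf{C}_B=\mathbf{P}_B+\mathbf{Q}_B$. Let $J$ be an increasing cost function and let $\omega^*\in\arg\min_{\omega\in[0,1]}J(\mathbf{B}_{\mathrm{SCI}}(\omega))$, $\bar\omega^*=1-\omega^*$. Then the triple $\mathbf{K}_A^*=\omega^*\mathbf{B}_{\mathrm{SCI}}(\omega^* )(\mathbf{P}_A+\omega^*\mathbf{Q}_A)^{-1}$, $\mathbf{K}_B^*=\bar\omega^*\mathbf{B}_{\mathrm{SCI}}(\omega^* )(\mathbf{P}_B+\bar\omega^*\mathbf{Q}_B)^{-1}$, $\mathbf{B}_F^*=\mathbf{B}_{\mathrm{SCI}}(\omega^* )$ is a solution of the problem: minimize $J(\mathbf{B}_F)$ over all pairs $(\mathbf{K},\mathbf{B}_F)$ defining a conservative fusion.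
   Context: $\mathcal{A}_{\mathrm{Split}}=\{\mathbf{M}\in\mathbb{R}^{n\times n} : \begin{bmatrix}\mathbf{P}_A & \mathbf{M}\\ \mathbf{M}^\intercal & \mathbf{P}_B\end{bmatrix}\succeq 0\}$. For $\mathbf{K}=(\mathbf{K}_A,\mathbf{K}_B)$ and $\mathbf{P}_{AB}\in\mathcal{A}_{\mathrm{Split}}$, $\mathbf{C}_F(\mathbf{K},\mathbf{P}_{AB})=\mathbf{K}_A\mathbf{C}_A\mathbf{K}_A^\intercal+\mathbf{K}_A\mathbf{P}_{AB}\mathbf{K}_B^\intercal+\mathbf{K}_B\mathbf{P}_{AB}^\intercal\mathbf{K}_A^\intercal+\mathbf{K}_B\mathbf{C}_B\mathbf{K}_B^\intercal$. A pair $(\mathbf{K},\mathbf{B}_F)$ ($\mathbf{B}_F$ symmetric) defines a conservative fusion if $\mathbf{K}_A+\mathbf{K}_B=\mathbf{I}$ and $\mathbf{B}_F\succeq\mathbf{C}_F(\mathbf{K},\mathbf{P}_{AB})$ for all $\mathbf{P}_{AB}\in\mathcal{A}_{\mathrm{Split}}$. For $\omega\in[0,1]$, $\bar\omega=1-\omega$: $\mathbf{B}_{\mathrm{SCI}}(\omega)^{-1}=\omega(\mathbf{P}_A+\omega\mathbf{Q}_A)^{-1}+\bar\omega(\mathbf{P}_B+\bar\omega\mathbf{Q}_B)^{-1}$. $J$ increasing means: $\mathbf{P}\preceq\mathbf{Q}\Rightarrow J(\mathbf{P})\le J(\mathbf{Q})$, and $\mathbf{P}\preceq\mathbf{Q}$,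 $\mathbf{P}\ne\mathbf{Q}\Rightarrow J(\mathbf{P})<J(\mathbf{Q})$ (Loewner order). *)

theory Defs
  imports "HOL-Analysis.Analysis"
begin

type_synonym 'n mat = "real ^ 'n ^ 'n"

definition sym_mat :: "real ^ 'n ^ 'n \<Rightarrow> bool" where
  "sym_mat M \<longleftrightarrow> transpose M = M"

definition psd :: "real ^ 'n ^ 'n \<Rightarrow> bool" where
  "psd M \<longleftrightarrow> sym_mat M \<and> (\<forall>x. 0 \<le> x \<bullet> (M *v x))"

definition pd :: "real ^ 'n ^ 'n \<Rightarrow> bool" where
  "pd M \<longleftrightarrow> sym_mat M \<and> (\<forall>x. x \<noteq> 0 \<longrightarrow> 0 < x \<bullet> (M *v x))"

definition loewner_le :: "real ^ 'n ^ 'n \<Rightarrow> real ^ 'n ^ 'n \<Rightarrow> bool" where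
  "loewner_le P Q \<longleftrightarrow> psd (Q - P)"

definition block_mat :: "real ^ 'n ^ 'n \<Rightarrow> real ^ 'n ^ 'n \<Rightarrow> real ^ 'n ^ 'n \<Rightarrow> real ^ 'n ^ 'n
    \<Rightarrow> real ^ ('n + 'n) ^ ('n + 'n)" where
  "block_mat A B C D = (\<chi> i j. case i of
      Inl i' \<Rightarrow> (case j of Inl j' \<Rightarrow> A $ i' $ j' | Inr j' \<Rightarrow> B $ i' $ j')
    | Inr i' \<Rightarrow> (case j of Inl j' \<Rightarrow> C $ i' $ j' | Inr j' \<Rightarrow> D $ i' $ j'))"

definition A_split :: "real ^ 'n ^ 'n \<Rightarrow> real ^ 'n ^ 'n \<Rightarrow> (real ^ 'n ^ 'n) set" where
  "A_split PA PB = {M. psd (block_mat PA M (transpose M) PB)}"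

definition C_F :: "real ^ 'n ^ 'n \<Rightarrow> real ^ 'n ^ 'n \<Rightarrow> real ^ 'n ^ 'n \<Rightarrow> real ^ 'n ^ 'n
    \<Rightarrow> real ^ 'n ^ 'n \<Rightarrow> real ^ 'n ^ 'n" where
  "C_F CA CB KA KB PAB =
     KA ** CA ** transpose KA + KA ** PAB ** transpose KB
     + KB ** transpose PAB ** transpose KA + KB ** CB ** transpose KB"

definition conservative_fusion ::
  "real ^ 'n ^ 'n \<Rightarrow> real ^ 'n ^ 'n \<Rightarrow> real ^ 'n ^ 'n \<Rightarrow> real ^ 'n ^ 'n
   \<Rightarrow> real ^ 'n ^ 'n \<Rightarrow> real ^ 'n ^ 'n \<Rightarrow> real ^ 'n ^ 'n \<Rightarrow> bool" where
  "conservative_fusion PA PB CA CB KA KB BF \<longleftrightarrow>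
     sym_mat BF \<and> KA + KB = mat 1 \<and>
     (\<forall>PAB \<in> A_split PA PB. loewner_le (C_F CA CB KA KB PAB) BF)"

definition B_SCI :: "real ^ 'n ^ 'n \<Rightarrow> real ^ 'n ^ 'n \<Rightarrow> real ^ 'n ^ 'n \<Rightarrow> real ^ 'n ^ 'n
    \<Rightarrow> real \<Rightarrow> real ^ 'n ^ 'n" where
  "B_SCI PA PB QA QB \<omega> = matrix_inv
     (\<omega> *\<^sub>R matrix_inv (PA + \<omega> *\<^sub>R QA)
      + (1 - \<omega>) *\<^sub>R matrix_inv (PB + (1 - \<omega>) *\<^sub>R QB))"

definition increasing_cost :: "(real ^ 'n ^ 'n \<Rightarrow> real) \<Rightarrow> bool" where
  "increasing_cost J \<longleftrightarrow>
     (\<forall>P Q. sym_mat P \<and> sym_mat Q \<and> loewner_le P Q \<longrightarrow> J P \<le> J Q) \<and>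
     (\<forall>P Q. sym_mat P \<and> sym_mat Q \<and> loewner_le P Q \<and> P \<noteq> Q \<longrightarrow> J P < J Q)"

end

theory Submission
  imports Defs
begin


definition qf :: "real^'n^'n \<Rightarrow> real^'n \<Rightarrow> real" where
  "qf M x = x \<bullet> (M *v x)"

lemma mv_scaleR_left: "((c::real) *\<^sub>R A) *v x = c *\<^sub>R (A *v (x::real^'n))"
  by (simp add: vec_eq_iff matrix_vector_mult_def sum_distrib_left mult.assoc)

lemma qf_add: "qf (A + B) x = qf A x + qf B x"
  by (simp add: qf_def matrix_vector_mult_add_rdistrib inner_add_right)
lemma qf_diff: "qf (A - B) x = qf A x - qf B x"
  by (simp add: qf_def matrix_vector_mult_diff_rdistrib inner_diff_right)
lemma qf_scale: "qf (c *\<^sub>R A) x = c * qf A x"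
  by (simp add: qf_def mv_scaleR_left)

lemma dot_transpose: "x \<bullet> (M *v y) = (transpose M *v x) \<bullet> (y::real^'n)"
  by (simp add: dot_lmul_matrix)

lemma qf_conj: "qf (K ** M ** transpose K) x = qf M (transpose K *v x)"
  unfolding qf_def by (simp add: matrix_vector_mul_assoc[symmetric] dot_transpose)

lemma sym_dot: "sym_mat M \<Longrightarrow> x \<bullet> (M *v y) = y \<bullet> (M *v x)"
  unfolding sym_mat_def by (metis dot_transpose inner_commute)

lemma qf_expand: "qf M (x + t *\<^sub>R y) = qf M x + t * (x \<bullet> (M *v y) + y \<bullet> (M *v x)) + t^2 * qf M y"
  unfolding qf_def by (simp add: matrix_vector_right_distrib matrix_vector_mult_scaleR inner_add_left inner_add_right algebra_simps power2_eq_square)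

lemma qf_neg: "qf M (- x) = qf M x"
proof -
  have "M *v (- x) = - (M *v x)" using matrix_vector_mult_scaleR[of M "-1" x] by simp
  then show ?thesis unfolding qf_def by simp
qed

lemma pd_inj: assumes "pd M" shows "M *v x = 0 \<Longrightarrow> x = 0"
  using assms unfolding pd_def by force

lemma pd_invertible: "pd M \<Longrightarrow> invertible M"
  by (metis invertible_left_inverse matrix_left_invertible_ker pd_inj)

lemma inv_props: assumes "invertible M" shows "M ** matrix_inv M = mat 1" "matrix_inv M ** M = mat 1"
proof -
  have "\<exists>A'. M ** A' = mat 1 \<and> A' ** M = mat 1" using assms invertible_def by blast
  then have "M ** matrix_inv M = mat 1 \<and> matrix_inv M ** M = mat 1"
    unfolding matrix_inv_def by (rule someI_ex)
  then show "M ** matrix_inv M = mat 1" "matrix_inv M ** M = mat 1" by auto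
qed

lemma inv_mv: assumes "invertible M" shows "M *v (matrix_inv M *v w) = w" "matrix_inv M *v (M *v w) = w"
  by (simp_all add: matrix_vector_mul_assoc inv_props[OF assms])

lemma inv_sym: assumes "invertible M" "sym_mat M" shows "sym_mat (matrix_inv M)"
proof -
  have "transpose (matrix_inv M) = matrix_inv M ** M ** transpose (matrix_inv M)"
    by (simp add: inv_props[OF assms(1)])
  also have "\<dots> = matrix_inv M ** transpose (matrix_inv M ** M)"
    using assms(2) by (simp add: matrix_mul_assoc matrix_transpose_mul sym_mat_def)
  also have "\<dots> = matrix_inv M" by (simp add: inv_props[OF assms(1)])
  finally show ?thesis unfolding sym_mat_def .
qed

lemma inv_pd: assumes "pd M" shows "pd (matrix_inv M)"
proof -
  have inv: "invertible M" by (rule pd_invertible[OF assms])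
  have "sym_mat (matrix_inv M)" using inv assms pd_def inv_sym by blast
  moreover have "x \<noteq> 0 \<Longrightarrow> 0 < x \<bullet> (matrix_inv M *v x)" for x
  proof -
    assume x: "x \<noteq> 0"
    define y where "y = matrix_inv M *v x"
    have xy: "x = M *v y" using inv_mv[OF inv] y_def by simp
    then have "y \<noteq> 0" using x by auto
    then have "0 < y \<bullet> (M *v y)" using assms pd_def by blast
    moreover have "x \<bullet> (matrix_inv M *v x) = y \<bullet> (M *v y)"
      unfolding y_def[symmetric] by (metis xy inner_commute)
    ultimately show ?thesis by simp
  qed
  ultimately show ?thesis unfolding pd_def by blast
qed



definition lft :: "real^('n+'n) \<Rightarrow> real^'n" where "lft w = (\<chi> i. w $ Inl i)"
definition rgt :: "real^('n+'n) \<Rightarrow> real^'n" where "rgt w = (\<chi> i. w $ Inr i)"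

lemma sum_plus_univ: "(\<Sum>k\<in>(UNIV::('a::finite+'a) set). f k) = (\<Sum>i\<in>UNIV. f (Inl i)) + (\<Sum>i\<in>UNIV. f (Inr i))"
  using sum.Plus[of "UNIV::'a set" "UNIV::'a set" f] by (simp add: comp_def)

lemma block_qf:
  "qf (block_mat A M N D) w = qf A (lft w) + lft w \<bullet> (M *v rgt w) + rgt w \<bullet> (N *v lft w) + qf D (rgt w)"
  unfolding qf_def inner_vec_def matrix_vector_mult_def block_mat_def lft_def rgt_def
  by (simp add: sum_plus_univ sum_distrib_left sum.distrib distrib_left)

lemma block_transpose:
  "transpose (block_mat A M N D) = block_mat (transpose A) (transpose N) (transpose M) (transpose D)"
  unfolding block_mat_def transpose_def
  by (simp add: vec_eq_iff split: sum.splits)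

lemma block_sym: "sym_mat A \<Longrightarrow> sym_mat D \<Longrightarrow> sym_mat (block_mat A M (transpose M) D)"
  unfolding sym_mat_def by (simp add: block_transpose)

lemma split_ineq:
  fixes p q :: "real^'n"
  assumes "M \<in> A_split PA PB"
  shows "0 \<le> qf PA p + 2 * (p \<bullet> (M *v q)) + qf PB q"
proof -
  define w :: "real^('n+'n)" where "w = (\<chi> k. case k of Inl i \<Rightarrow> p $ i | Inr i \<Rightarrow> q $ i)"
  have "lft w = p" "rgt w = q" unfolding w_def lft_def rgt_def by (simp_all add: vec_eq_iff)
  moreover have "0 \<le> qf (block_mat PA M (transpose M) PB) w"
    using assms unfolding A_split_def psd_def qf_def by blast
  ultimately show ?thesis by (simp add: block_qf dot_transpose inner_commute)
qed

lemma psd_cs: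
  assumes "sym_mat M" "\<forall>x. 0 \<le> qf M x"
  shows "(p \<bullet> (M *v u))^2 \<le> qf M p * qf M u"
proof -
  let ?c = "p \<bullet> (M *v u)"
  have e: "qf M (p + t *\<^sub>R u) = qf M p + 2 * t * ?c + t^2 * qf M u" for t
    using qf_expand[of M p t u] sym_dot[OF assms(1), of u p] by simp
  show ?thesis
  proof (cases "qf M u = 0")
    case True
    have "?c = 0"
    proof (rule ccontr)
      assume "?c \<noteq> 0"
      have "0 \<le> qf M (p + (- (qf M p + 1) / (2 * ?c)) *\<^sub>R u)" using assms(2) by blast
      also have "\<dots> = -1" unfolding e using True \<open>?c \<noteq> 0\<close> by (simp add: field_simps)
      finally show False by simp
    qed
    then show ?thesis using True by simp
  next
    case False
    then have pos: "qf M u > 0" using assms(2) by (metis order_le_less)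
    have "0 \<le> qf M (p + (- ?c / qf M u) *\<^sub>R u)" using assms(2) by blast
    also have "\<dots> = qf M p - ?c^2 / qf M u" unfolding e using pos
      by (simp add: field_simps power2_eq_square)
    finally have "?c^2 / qf M u \<le> qf M p" by simp
    then show ?thesis using pos by (simp add: field_simps)
  qed
qed



definition fo :: "real \<Rightarrow> real \<Rightarrow> real \<Rightarrow> real \<Rightarrow> real" where
  "fo a b d w = w * (1 - w) * d - (1 - w) * a - w * b"
definition dl :: "real \<Rightarrow> real \<Rightarrow> real \<Rightarrow> real" where
  "dl a b d = (d + a - b)^2 - 4 * a * d"
definition lo :: "real \<Rightarrow> real \<Rightarrow> real \<Rightarrow> real" where
  "lo a b d = (d + a - b - sqrt (dl a b d)) / (2 * d)"
definition hi :: "real \<Rightarrow> real \<Rightarrow> real \<Rightarrow> real" where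
  "hi a b d = (d + a - b + sqrt (dl a b d)) / (2 * d)"
definition mid :: "real \<Rightarrow> real \<Rightarrow> real \<Rightarrow> real" where
  "mid a b d = (d + a - b) / (2 * d)"

locale scal =
  fixes a b d :: real
  assumes a0: "0 \<le> a" and b0: "0 \<le> b" and ab: "0 < a + b"
    and dab: "a + b + 2 * sqrt (a * b) \<le> d"
begin

lemma sab0: "0 \<le> sqrt (a * b)"
  using a0 b0 by simp

lemma d_pos: "0 < d"
  using ab dab sab0 by linarith

lemma sq_ab: "(sqrt (a*b))^2 = a * b"
  using a0 b0 by simp

lemma dl_alt: "dl a b d = (d - a - b)^2 - 4 * a * b"
  unfolding dl_def by (simp add: power2_eq_square algebra_simps)

lemma dl_nonneg: "0 \<le> dl a b d"
proof -
  have "2 * sqrt (a*b) \<le> d - a - b" using dab by simp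
  moreover have "0 \<le> 2 * sqrt (a*b)" using a0 b0 by simp
  ultimately have "(2 * sqrt (a*b))^2 \<le> (d - a - b)^2"
    by (rule power_mono)
  moreover have "(2 * sqrt (a*b))^2 = 4*a*b" using sq_ab by (simp add: power_mult_distrib)
  ultimately show ?thesis unfolding dl_alt by simp
qed

lemma sq_dl: "(sqrt (dl a b d))^2 = dl a b d"
  using dl_nonneg by simp

lemma fo_factor: "fo a b d w = - d * (w - lo a b d) * (w - hi a b d)"
proof -
  have dn: "d \<noteq> 0" using d_pos by simp
  show ?thesis
    unfolding fo_def lo_def hi_def using dn sq_dl
    by (simp add: field_simps power2_eq_square dl_def)
qed

lemma lo_le_hi: "lo a b d \<le> hi a b d"
  unfolding lo_def hi_def using d_pos dl_nonneg by (intro divide_right_mono) auto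

lemma fo_iff: "0 \<le> fo a b d w \<longleftrightarrow> lo a b d \<le> w \<and> w \<le> hi a b d"
proof -
  have e: "fo a b d w = - (d * ((w - lo a b d) * (w - hi a b d)))"
    unfolding fo_factor by (simp add: algebra_simps)
  have "0 \<le> fo a b d w \<longleftrightarrow> (w - lo a b d) * (w - hi a b d) \<le> 0"
    unfolding e using d_pos by (simp add: mult_le_0_iff)
  also have "\<dots> \<longleftrightarrow> lo a b d \<le> w \<and> w \<le> hi a b d"
    using lo_le_hi by (auto simp: mult_le_0_iff)
  finally show ?thesis .
qed

lemma lo_nonneg: "0 \<le> lo a b d"
proof -
  have p: "0 \<le> d + a - b" using dab a0 b0 sab0 by linarith
  have "dl a b d \<le> (d + a - b)^2" unfolding dl_def using a0 d_pos by simp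
  then have "sqrt (dl a b d) \<le> sqrt ((d + a - b)^2)" by (rule real_sqrt_le_mono)
  then have "sqrt (dl a b d) \<le> d + a - b" using p by simp
  then show ?thesis unfolding lo_def using d_pos by simp
qed

lemma hi_le1: "hi a b d \<le> 1"
proof -
  have p: "0 \<le> d - a + b" using dab a0 b0 sab0 by linarith
  have "dl a b d \<le> (d - a + b)^2" unfolding dl_def using b0 d_pos
    by (simp add: power2_eq_square algebra_simps)
  then have "sqrt (dl a b d) \<le> sqrt ((d - a + b)^2)" by (rule real_sqrt_le_mono)
  then have "sqrt (dl a b d) \<le> d - a + b" using p by simp
  then show ?thesis unfolding hi_def using d_pos by simp
qed

lemma mid_in: "lo a b d \<le> mid a b d" "mid a b d \<le> hi a b d"
  unfolding lo_def hi_def mid_def using d_pos dl_nonneg by (intro divide_right_mono; auto)+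

lemma fo_mid: "0 \<le> fo a b d (mid a b d)"
  using fo_iff mid_in by blast

end



lemma mv_neg: "(A::real^'n^'n) *v (- x) = - (A *v x)"
  using matrix_vector_mult_scaleR[of A "-1" x] by simp

lemma qf_expand2: "qf M ((1 - t) *\<^sub>R x + t *\<^sub>R y) = (1 - t)^2 * qf M x + (t * (1 - t)) * (x \<bullet> (M *v y) + y \<bullet> (M *v x)) + t^2 * qf M y"
  unfolding qf_def by (simp add: matrix_vector_right_distrib matrix_vector_mult_scaleR inner_add_left inner_add_right algebra_simps power2_eq_square)

lemma common_omega:
  fixes MA MB Dm :: "real^'n^'n"
  assumes psdA: "\<forall>z. 0 \<le> qf MA z" and psdB: "\<forall>z. 0 \<le> qf MB z"
    and posd: "\<forall>z. z \<noteq> 0 \<longrightarrow> 0 < qf MA z + qf MB z"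
    and pw: "\<forall>z. qf MA z + qf MB z + 2 * sqrt (qf MA z * qf MB z) \<le> qf Dm z"
  shows "\<exists>w\<in>{0..1}. \<forall>z. 0 \<le> fo (qf MA z) (qf MB z) (qf Dm z) w"
proof -
  have S: "scal (qf MA z) (qf MB z) (qf Dm z)" if "z \<noteq> 0" for z
    using assms that by unfold_locales auto
  define L where "L z = lo (qf MA z) (qf MB z) (qf Dm z)" for z
  define H where "H z = hi (qf MA z) (qf MB z) (qf Dm z)" for z
  define F where "F z w = fo (qf MA z) (qf MB z) (qf Dm z) w" for z w
  have Fiff: "z \<noteq> 0 \<Longrightarrow> 0 \<le> F z w \<longleftrightarrow> L z \<le> w \<and> w \<le> H z" for z w
    unfolding F_def L_def H_def using scal.fo_iff[OF S] by blast
  have pair: "L x \<le> H y" if x: "x \<noteq> 0" and y: "y \<noteq> 0" for x y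
  proof (rule ccontr)
    assume "\<not> L x \<le> H y"
    define w0 where "w0 = (H y + L x) / 2"
    have w0: "H y < w0" "w0 < L x" using \<open>\<not> L x \<le> H y\<close> w0_def by auto
    have fx: "F x w0 < 0" using Fiff[OF x, of w0] w0 by auto
    have fy: "F y w0 < 0" using Fiff[OF y, of w0] w0 by auto
    define G where "G = (w0 * (1 - w0)) *\<^sub>R Dm - (1 - w0) *\<^sub>R MA - w0 *\<^sub>R MB"
    have qfG: "qf G z = F z w0" for z
      unfolding G_def F_def fo_def by (simp add: qf_add qf_diff qf_scale)
    define y' where "y' = (if x \<bullet> (G *v y) + y \<bullet> (G *v x) \<le> 0 then y else - y)"
    have c': "x \<bullet> (G *v y') + y' \<bullet> (G *v x) \<le> 0"
      unfolding y'_def by (auto simp: mv_neg)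
    have qy': "qf M y' = qf M y" for M unfolding y'_def by (simp add: qf_neg)
    have y'nz: "y' \<noteq> 0" using y unfolding y'_def by auto
    define z where "z t = (1 - t) *\<^sub>R x + t *\<^sub>R y'" for t
    have negz: "qf G (z t) < 0" if "t \<in> {0..1}" for t
    proof -
      have e: "qf G (z t) = (1 - t)^2 * qf G x + (t * (1 - t)) * (x \<bullet> (G *v y') + y' \<bullet> (G *v x)) + t^2 * qf G y'"
        unfolding z_def by (rule qf_expand2)
      have t01: "0 \<le> t" "0 \<le> 1 - t" using that by auto
      have m: "(t * (1 - t)) * (x \<bullet> (G *v y') + y' \<bullet> (G *v x)) \<le> 0"
        using t01 c' by (simp add: mult_nonneg_nonpos)
      have gy: "qf G y' < 0" using qy'[of G] qfG[of y] fy by simp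
      have gx: "qf G x < 0" using qfG[of x] fx by simp
      show ?thesis
      proof (cases "t = 0")
        case True then show ?thesis using gx unfolding z_def by simp
      next
        case False
        then have "0 < t^2" by simp
        then have "t^2 * qf G y' < 0" using gy by (simp add: mult_pos_neg)
        moreover have "(1 - t)^2 * qf G x \<le> 0" using gx by (simp add: mult_nonneg_nonpos)
        ultimately show ?thesis unfolding e using m by linarith
      qed
    qed
    have znz: "z t \<noteq> 0" if "t \<in> {0..1}" for t
      using negz[OF that] unfolding qf_def by auto
    define m where "m t = mid (qf MA (z t)) (qf MB (z t)) (qf Dm (z t))" for t
    have dpos: "0 < qf Dm (z t)" if "t \<in> {0..1}" for t
      using scal.d_pos[OF S[OF znz[OF that]]] .
    have zexp: "qf M (z t) = (1 - t)^2 * qf M x + (t * (1 - t)) * (x \<bullet> (M *v y') + y' \<bullet> (M *v x)) + t^2 * qf M y'" for M t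
      unfolding z_def by (rule qf_expand2)
    have cont: "continuous_on {0..1} m"
    proof -
      have "continuous_on {0..1} (\<lambda>t. (qf Dm (z t) + qf MA (z t) - qf MB (z t)) / (2 * qf Dm (z t)))"
      proof (rule continuous_on_divide)
        show "continuous_on {0..1} (\<lambda>t. qf Dm (z t) + qf MA (z t) - qf MB (z t))"
          unfolding zexp by (intro continuous_intros)
        show "continuous_on {0..1} (\<lambda>t. 2 * qf Dm (z t))"
          unfolding zexp by (intro continuous_intros)
        show "\<forall>t\<in>{0..1}. 2 * qf Dm (z t) \<noteq> 0" using dpos by force
      qed
      then show ?thesis unfolding m_def mid_def .
    qed
    have m0: "w0 \<le> m 0"
    proof -
      have "z 0 = x" unfolding z_def by simp
      then show ?thesis using scal.mid_in(1)[OF S[OF x]] w0 unfolding m_def L_def by simp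
    qed
    have m1: "m 1 \<le> w0"
    proof -
      have "z 1 = y'" unfolding z_def by simp
      then have "m 1 = mid (qf MA y) (qf MB y) (qf Dm y)"
        unfolding m_def by (simp add: qy')
      then show ?thesis using scal.mid_in(2)[OF S[OF y]] w0 unfolding H_def by simp
    qed
    obtain t where t: "0 \<le> t" "t \<le> 1" "m t = w0"
      using IVT2'[of m 1 w0 0, OF m1 m0 _ cont] by auto
    have "0 \<le> F (z t) w0"
      using scal.fo_mid[OF S[OF znz]] t unfolding F_def m_def by auto
    then show False using negz[of t] t qfG[of "z t"] by auto
  qed
  have ex: "(vec 1 :: real^'n) \<noteq> 0" by (simp add: vec_eq_iff)
  define w where "w = Sup (L ` {z. z \<noteq> 0})"
  have ne: "L ` {z. z \<noteq> 0} \<noteq> {}" using ex by auto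
  have LH: "z \<noteq> 0 \<Longrightarrow> 0 \<le> L z \<and> L z \<le> H z \<and> H z \<le> 1" for z
    unfolding L_def H_def using scal.lo_nonneg scal.lo_le_hi scal.hi_le1 S by blast
  have bdd: "bdd_above (L ` {z. z \<noteq> 0})"
    by (rule bdd_aboveI[of _ 1]) (use LH in force)
  have up: "z \<noteq> 0 \<Longrightarrow> L z \<le> w" for z
    unfolding w_def using bdd by (intro cSup_upper) auto
  have low: "z \<noteq> 0 \<Longrightarrow> w \<le> H z" for z
    unfolding w_def using ne pair by (intro cSup_least) auto
  have "0 \<le> w" using up[OF ex] LH[OF ex] by linarith
  moreover have "w \<le> 1" using low[OF ex] LH[OF ex] by linarith
  moreover have "0 \<le> F z w" for z
  proof (cases "z = 0")
    case True then show ?thesis unfolding F_def fo_def qf_def by simp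
  next
    case False then show ?thesis using Fiff up low by blast
  qed
  ultimately show ?thesis unfolding F_def by (intro bexI[of _ w]) auto
qed



lemma transpose_add: "transpose (A + B) = transpose A + (transpose B :: real^'n^'n)"
  by (simp add: transpose_def vec_eq_iff)
lemma transpose_diff: "transpose (A - B) = transpose A - (transpose B :: real^'n^'n)"
  by (simp add: transpose_def vec_eq_iff)

lemma sym_add: "sym_mat A \<Longrightarrow> sym_mat B \<Longrightarrow> sym_mat (A + B)"
  unfolding sym_mat_def by (simp add: transpose_add)
lemma sym_diff: "sym_mat A \<Longrightarrow> sym_mat B \<Longrightarrow> sym_mat (A - B)"
  unfolding sym_mat_def by (simp add: transpose_diff)
lemma sym_scale: "sym_mat A \<Longrightarrow> sym_mat (c *\<^sub>R A)"
  unfolding sym_mat_def by (simp add: transpose_scalar)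
lemma sym_conj: "sym_mat M \<Longrightarrow> sym_mat (K ** M ** transpose K)"
  unfolding sym_mat_def by (simp add: matrix_transpose_mul matrix_mul_assoc)
lemma sym_cross: "sym_mat (K ** P ** transpose L + L ** transpose P ** transpose K)"
  unfolding sym_mat_def by (simp add: transpose_add matrix_transpose_mul matrix_mul_assoc add.commute)

lemma sym_CF: "sym_mat CA \<Longrightarrow> sym_mat CB \<Longrightarrow> sym_mat (C_F CA CB KA KB PAB)"
proof -
  assume a: "sym_mat CA" "sym_mat CB"
  have "C_F CA CB KA KB PAB = KA ** CA ** transpose KA
     + (KA ** PAB ** transpose KB + KB ** transpose PAB ** transpose KA) + KB ** CB ** transpose KB"
    unfolding C_F_def by (simp add: add.assoc)
  then show ?thesis using a by (simp add: sym_add sym_conj sym_cross)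
qed

lemma qf_gen: "qf (K ** M ** transpose L) z = (transpose K *v z) \<bullet> (M *v (transpose L *v z))"
  unfolding qf_def by (simp add: matrix_vector_mul_assoc[symmetric] dot_transpose)

lemma qf_CF: "qf (C_F CA CB KA KB PAB) z = qf CA (transpose KA *v z)
   + 2 * ((transpose KA *v z) \<bullet> (PAB *v (transpose KB *v z))) + qf CB (transpose KB *v z)"
proof -
  have "(transpose KB *v z) \<bullet> (transpose PAB *v (transpose KA *v z))
      = (transpose KA *v z) \<bullet> (PAB *v (transpose KB *v z))"
    by (simp add: dot_transpose inner_commute)
  then show ?thesis unfolding C_F_def
    by (simp add: qf_add qf_gen qf_def[symmetric])
qed

lemma loewner_qf: "loewner_le C B \<Longrightarrow> qf C z \<le> qf B z"
  unfolding loewner_le_def psd_def qf_def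
  by (metis diff_ge_0_iff_ge inner_diff_right matrix_vector_mult_diff_rdistrib)

lemma loewner_intro: "sym_mat C \<Longrightarrow> sym_mat B \<Longrightarrow> (\<And>z. qf C z \<le> qf B z) \<Longrightarrow> loewner_le C B"
  unfolding loewner_le_def psd_def qf_def[symmetric]
  by (simp add: sym_diff qf_diff)

lemma pd_qf: "pd M \<Longrightarrow> 0 \<le> qf M x"
  unfolding pd_def qf_def by (cases "x = 0") (auto intro: less_imp_le)
lemma pd_qf_pos: "pd M \<Longrightarrow> x \<noteq> 0 \<Longrightarrow> 0 < qf M x"
  unfolding pd_def qf_def by auto
lemma pd_sym: "pd M \<Longrightarrow> sym_mat M"
  unfolding pd_def by auto
lemma pd_qf_zero: "pd M \<Longrightarrow> qf M x = 0 \<Longrightarrow> x = 0"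
  using pd_qf_pos by fastforce

lemma pd_comb: assumes "pd P" "pd Q" "0 \<le> c" shows "pd (P + c *\<^sub>R Q)"
  unfolding pd_def
proof (intro conjI allI impI)
  show "sym_mat (P + c *\<^sub>R Q)" using assms by (simp add: pd_sym sym_add sym_scale)
  fix x :: "real^'a" assume "x \<noteq> 0"
  have "0 < qf P x" using pd_qf_pos[OF assms(1) \<open>x \<noteq> 0\<close>] .
  moreover have "0 \<le> c * qf Q x" by (rule mult_nonneg_nonneg[OF assms(3) pd_qf[OF assms(2)]])
  ultimately show "0 < x \<bullet> ((P + c *\<^sub>R Q) *v x)"
    using qf_add[of P "c *\<^sub>R Q" x] qf_scale[of c Q x] unfolding qf_def by simp
qed

lemma zero_split: "pd PA \<Longrightarrow> pd PB \<Longrightarrow> 0 \<in> A_split PA PB"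
  unfolding A_split_def psd_def
  by (simp add: block_sym pd_sym block_qf[unfolded qf_def] pd_qf[unfolded qf_def] add_nonneg_nonneg)

definition outer :: "real^'n \<Rightarrow> real^'n \<Rightarrow> real^'n^'n" where
  "outer a b = (\<chi> i j. a $ i * b $ j)"

lemma outer_mv: "outer a b *v y = (b \<bullet> y) *\<^sub>R a"
  by (simp add: outer_def vec_eq_iff matrix_vector_mult_def inner_vec_def sum_distrib_left mult_ac)

lemma outer_split:
  fixes u v :: "real^'n"
  assumes pA: "pd PA" and pB: "pd PB"
    and s: "0 < qf PA u" and t: "0 < qf PB v"
  defines "M \<equiv> (1 / (sqrt (qf PA u) * sqrt (qf PB v))) *\<^sub>R outer (PA *v u) (PB *v v)"
  shows "M \<in> A_split PA PB" "u \<bullet> (M *v v) = sqrt (qf PA u * qf PB v)"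
proof -
  define s where "s = sqrt (qf PA u)"
  define t where "t = sqrt (qf PB v)"
  have s0: "0 < s" "s^2 = qf PA u" unfolding s_def using s by auto
  have t0: "0 < t" "t^2 = qf PB v" unfolding t_def using t by auto
  have Mv: "M *v q = ((1 / (s * t)) * ((PB *v v) \<bullet> q)) *\<^sub>R (PA *v u)" for q
    unfolding M_def s_def t_def by (simp add: mv_scaleR_left outer_mv)
  have key: "0 \<le> qf PA p + 2 * (p \<bullet> (M *v q)) + qf PB q" for p q
  proof -
    define \<alpha> where "\<alpha> = p \<bullet> (PA *v u)"
    define \<beta> where "\<beta> = q \<bullet> (PB *v v)"
    define P where "P = qf PA p"
    define Q where "Q = qf PB q"
    have P0: "0 \<le> P" "0 \<le> Q" unfolding P_def Q_def using pA pB pd_qf by auto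
    have a2: "\<alpha>^2 \<le> P * s^2" unfolding \<alpha>_def P_def s0(2)
      using psd_cs[of PA p u] pA pd_sym pd_qf by blast
    have b2: "\<beta>^2 \<le> Q * t^2" unfolding \<beta>_def Q_def t0(2)
      using psd_cs[of PB q v] pB pd_sym pd_qf by blast
    define r where "r = \<alpha> * \<beta> / (s * t)"
    have pr: "p \<bullet> (M *v q) = r" unfolding Mv r_def \<alpha>_def \<beta>_def
      by (simp add: inner_commute)
    have "(\<alpha> * \<beta>)^2 \<le> (P * s^2) * (Q * t^2)"
      unfolding power_mult_distrib by (rule mult_mono[OF a2 b2]) (use P0 in auto)
    then have h: "(\<alpha> * \<beta>)^2 \<le> (P * Q) * (s^2 * t^2)" by (simp add: mult_ac)
    have st: "0 < s^2 * t^2" using s0(1) t0(1) by simp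
    have "r^2 = (\<alpha> * \<beta>)^2 / (s^2 * t^2)" unfolding r_def by (simp add: power_divide power_mult_distrib)
    also have "\<dots> \<le> P * Q" using h st by (simp add: pos_divide_le_eq)
    finally have "r^2 \<le> P * Q" .
    also have "P * Q \<le> ((P + Q) / 2)^2"
    proof -
      have sq: "0 \<le> (P - Q)^2" by simp
      have "((P + Q) / 2)^2 - P * Q = (P - Q)^2 / 4" by (simp add: power2_eq_square field_simps)
      then show ?thesis using sq by linarith
    qed
    finally have "(- r)^2 \<le> ((P + Q) / 2)^2" by simp
    then have "- r \<le> (P + Q) / 2" by (rule power2_le_imp_le) (use P0 in simp)
    then show ?thesis using pr P_def Q_def by simp
  qed
  have "psd (block_mat PA M (transpose M) PB)"
    unfolding psd_def
  proof
    show "sym_mat (block_mat PA M (transpose M) PB)" using pA pB by (simp add: block_sym pd_sym)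
    show "\<forall>x. 0 \<le> x \<bullet> (block_mat PA M (transpose M) PB *v x)"
    proof
      fix x :: "real^('n+'n)"
      have "rgt x \<bullet> (transpose M *v lft x) = lft x \<bullet> (M *v rgt x)"
        by (simp add: dot_transpose inner_commute)
      then show "0 \<le> x \<bullet> (block_mat PA M (transpose M) PB *v x)"
        using key[of "lft x" "rgt x"] block_qf[of PA M "transpose M" PB x] unfolding qf_def by simp
    qed
  qed
  then show "M \<in> A_split PA PB" unfolding A_split_def by simp
  have "u \<bullet> (M *v v) = (1 / (s * t)) * (qf PB v * qf PA u)"
    unfolding Mv by (simp add: qf_def inner_commute)
  also have "\<dots> = s * t" using s0 t0 by (simp add: power2_eq_square field_simps)
  finally show "u \<bullet> (M *v v) = sqrt (qf PA u * qf PB v)" unfolding s_def t_def by (simp add: real_sqrt_mult)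
qed

lemma pointwise:
  assumes pA: "pd PA" and pB: "pd PB" and qA: "pd QA" and qB: "pd QB"
    and cons: "conservative_fusion PA PB (PA + QA) (PB + QB) KA KB BF"
  shows "qf PA (transpose KA *v z) + qf QA (transpose KA *v z) + qf PB (transpose KB *v z) + qf QB (transpose KB *v z)
     + 2 * sqrt (qf PA (transpose KA *v z) * qf PB (transpose KB *v z)) \<le> qf BF z"
proof -
  define u where "u = transpose KA *v z"
  define v where "v = transpose KB *v z"
  obtain M where M: "M \<in> A_split PA PB" "u \<bullet> (M *v v) = sqrt (qf PA u * qf PB v)"
  proof (cases "qf PA u = 0 \<or> qf PB v = 0")
    case True
    then show ?thesis using that[of 0] zero_split[OF pA pB] by auto
  next
    case False
    then have "0 < qf PA u" "0 < qf PB v" using pd_qf pA pB by (auto simp: order_le_less)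
    then show ?thesis using that outer_split[OF pA pB] by blast
  qed
  have "loewner_le (C_F (PA + QA) (PB + QB) KA KB M) BF"
    using cons M(1) unfolding conservative_fusion_def by blast
  then have "qf (C_F (PA + QA) (PB + QB) KA KB M) z \<le> qf BF z" by (rule loewner_qf)
  then show ?thesis unfolding qf_CF u_def[symmetric] v_def[symmetric] M(2) qf_add by simp
qed



lemma qf_scaleR_vec: "qf M (c *\<^sub>R x) = c^2 * qf M x"
  unfolding qf_def by (simp add: matrix_vector_mult_scaleR power2_eq_square)

lemma quad_lower:
  assumes "sym_mat R" "\<forall>x. 0 \<le> qf R x" "R *v p0 = c *\<^sub>R g"
  shows "c * (p0 \<bullet> g) + 2 * c * ((p - p0) \<bullet> g) \<le> qf R p"
proof -
  have p: "p = p0 + 1 *\<^sub>R (p - p0)" by simp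
  have "qf R p = qf R p0 + (p0 \<bullet> (R *v (p - p0)) + (p - p0) \<bullet> (R *v p0)) + qf R (p - p0)"
    using qf_expand[of R p0 1 "p - p0"] by simp
  also have "p0 \<bullet> (R *v (p - p0)) = (p - p0) \<bullet> (R *v p0)" using sym_dot[OF assms(1)] .
  also have "qf R p0 = c * (p0 \<bullet> g)" unfolding qf_def assms(3) by simp
  also have "(p - p0) \<bullet> (R *v p0) = c * ((p - p0) \<bullet> g)" unfolding assms(3) by simp
  finally show ?thesis using assms(2) by simp
qed

locale sci =
  fixes PA PB QA QB :: "real^'n^'n" and w :: real
  assumes pA: "pd PA" and pB: "pd PB" and qA: "pd QA" and qB: "pd QB"
    and w0: "0 \<le> w" and w1: "w \<le> 1"
begin

definition "RA = PA + w *\<^sub>R QA"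
definition "RB = PB + (1 - w) *\<^sub>R QB"
definition "S = w *\<^sub>R matrix_inv RA + (1 - w) *\<^sub>R matrix_inv RB"
definition "BS = matrix_inv S"
definition "g z = BS *v z"
definition "u0 z = w *\<^sub>R (matrix_inv RA *v g z)"
definition "v0 z = (1 - w) *\<^sub>R (matrix_inv RB *v g z)"

lemma B_eq: "B_SCI PA PB QA QB w = BS"
  unfolding B_SCI_def BS_def S_def RA_def RB_def ..

lemma RA_pd: "pd RA" unfolding RA_def using pA qA w0 by (rule pd_comb)
lemma RB_pd: "pd RB" unfolding RB_def using pB qB w1 by (intro pd_comb) auto
lemma iRA: "pd (matrix_inv RA)" by (rule inv_pd[OF RA_pd])
lemma iRB: "pd (matrix_inv RB)" by (rule inv_pd[OF RB_pd])

lemma S_pd: "pd S"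
  unfolding pd_def
proof (intro conjI allI impI)
  show "sym_mat S" unfolding S_def using iRA iRB by (simp add: pd_sym sym_add sym_scale)
  fix x :: "real^'n" assume x: "x \<noteq> 0"
  have a: "0 < qf (matrix_inv RA) x" "0 < qf (matrix_inv RB) x"
    using pd_qf_pos[OF iRA x] pd_qf_pos[OF iRB x] .
  have "0 < w * qf (matrix_inv RA) x + (1 - w) * qf (matrix_inv RB) x"
  proof (cases "w = 0")
    case True then show ?thesis using a by simp
  next
    case False then have "0 < w" using w0 by simp
    then have "0 < w * qf (matrix_inv RA) x" using a by simp
    moreover have "0 \<le> (1 - w) * qf (matrix_inv RB) x" using a w1 by simp
    ultimately show ?thesis by linarith
  qed
  then show "0 < x \<bullet> (S *v x)" unfolding S_def qf_add[unfolded qf_def] qf_scale[unfolded qf_def]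
    by (simp add: qf_def)
qed

lemma S_inv: "invertible S" by (rule pd_invertible[OF S_pd])
lemma BS_pd: "pd BS" unfolding BS_def by (rule inv_pd[OF S_pd])
lemma BS_sym: "sym_mat BS" by (rule pd_sym[OF BS_pd])

lemma z_eq: "S *v g z = z"
  unfolding g_def BS_def by (rule inv_mv(1)[OF S_inv])

lemma uv0: "u0 z + v0 z = z"
proof -
  have "S *v g z = u0 z + v0 z"
    unfolding S_def u0_def v0_def by (simp add: matrix_vector_mult_add_rdistrib mv_scaleR_left)
  then show ?thesis using z_eq by simp
qed

lemma RA_u0: "RA *v u0 z = w *\<^sub>R g z"
  unfolding u0_def by (simp add: matrix_vector_mult_scaleR inv_mv(1)[OF pd_invertible[OF RA_pd]])
lemma RB_v0: "RB *v v0 z = (1 - w) *\<^sub>R g z"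
  unfolding v0_def by (simp add: matrix_vector_mult_scaleR inv_mv(1)[OF pd_invertible[OF RB_pd]])

lemma qfB: "qf BS z = z \<bullet> g z"
  unfolding qf_def g_def ..

lemma lower_mid:
  assumes "0 < w" "w < 1" "u + v = z"
  shows "qf BS z \<le> (1 / w) * qf RA u + (1 / (1 - w)) * qf RB v"
proof -
  have a: "w * (u0 z \<bullet> g z) + 2 * w * ((u - u0 z) \<bullet> g z) \<le> qf RA u"
    by (rule quad_lower[OF pd_sym[OF RA_pd] _ RA_u0]) (use RA_pd pd_qf in blast)
  have b: "(1 - w) * (v0 z \<bullet> g z) + 2 * (1 - w) * ((v - v0 z) \<bullet> g z) \<le> qf RB v"
    by (rule quad_lower[OF pd_sym[OF RB_pd] _ RB_v0]) (use RB_pd pd_qf in blast)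
  have a': "u0 z \<bullet> g z + 2 * ((u - u0 z) \<bullet> g z) \<le> (1 / w) * qf RA u"
    using a assms(1) by (simp add: field_simps)
  have b': "v0 z \<bullet> g z + 2 * ((v - v0 z) \<bullet> g z) \<le> (1 / (1 - w)) * qf RB v"
    using b assms(2) by (simp add: field_simps)
  have "(u - u0 z) + (v - v0 z) = 0" using assms(3) uv0[of z] by (simp add: algebra_simps)
  then have "(u - u0 z) \<bullet> g z + (v - v0 z) \<bullet> g z = 0" by (metis inner_add_left inner_zero_left)
  moreover have "u0 z \<bullet> g z + v0 z \<bullet> g z = z \<bullet> g z" using uv0[of z] by (metis inner_add_left)
  ultimately show ?thesis using a' b' qfB[of z] by linarith
qed

lemma end0: assumes "w = 0" shows "qf BS z = qf RB z"
proof -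
  have "u0 z = 0" unfolding u0_def using assms by simp
  then have v: "v0 z = z" using uv0[of z] by simp
  have "qf RB z = z \<bullet> ((1 - w) *\<^sub>R g z)" unfolding qf_def using RB_v0[of z] v by simp
  then show ?thesis using assms qfB by simp
qed

lemma end1: assumes "w = 1" shows "qf BS z = qf RA z"
proof -
  have "v0 z = 0" unfolding v0_def using assms by simp
  then have v: "u0 z = z" using uv0[of z] by simp
  have "qf RA z = z \<bullet> (w *\<^sub>R g z)" unfolding qf_def using RA_u0[of z] v by simp
  then show ?thesis using assms qfB by simp
qed

definition "KA = w *\<^sub>R (BS ** matrix_inv RA)"
definition "KB = (1 - w) *\<^sub>R (BS ** matrix_inv RB)"

lemma K_sum: "KA + KB = mat 1"
proof -
  have "KA + KB = BS ** S"
    unfolding KA_def KB_def S_def by (simp add: matrix_add_ldistrib matrix_scalar_ac scalar_matrix_assoc)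
  also have "\<dots> = mat 1" unfolding BS_def by (rule inv_props(2)[OF S_inv])
  finally show ?thesis .
qed

lemma KA_t: "transpose KA *v z = u0 z"
proof -
  have s1: "transpose (matrix_inv RA) = matrix_inv RA" using pd_sym[OF iRA] sym_mat_def by blast
  have s2: "transpose BS = BS" using BS_sym sym_mat_def by blast
  show ?thesis unfolding KA_def u0_def g_def
    by (simp add: transpose_scalar matrix_transpose_mul s1 s2 mv_scaleR_left matrix_vector_mul_assoc)
qed

lemma KB_t: "transpose KB *v z = v0 z"
proof -
  have s1: "transpose (matrix_inv RB) = matrix_inv RB" using pd_sym[OF iRB] sym_mat_def by blast
  have s2: "transpose BS = BS" using BS_sym sym_mat_def by blast
  show ?thesis unfolding KB_def v0_def g_def
    by (simp add: transpose_scalar matrix_transpose_mul s1 s2 mv_scaleR_left matrix_vector_mul_assoc)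
qed

lemma sci_conservative: "conservative_fusion PA PB (PA + QA) (PB + QB) KA KB BS"
  unfolding conservative_fusion_def
proof (intro conjI ballI)
  show "sym_mat BS" by (rule BS_sym)
  show "KA + KB = mat 1" by (rule K_sum)
  fix PAB assume PAB: "PAB \<in> A_split PA PB"
  show "loewner_le (C_F (PA + QA) (PB + QB) KA KB PAB) BS"
  proof (rule loewner_intro)
    show "sym_mat (C_F (PA + QA) (PB + QB) KA KB PAB)"
      using pA pB qA qB by (intro sym_CF) (simp_all add: pd_sym sym_add)
    show "sym_mat BS" by (rule BS_sym)
    fix z
    have e: "qf (C_F (PA + QA) (PB + QB) KA KB PAB) z = qf PA (u0 z) + qf QA (u0 z)
       + 2 * (u0 z \<bullet> (PAB *v v0 z)) + qf PB (v0 z) + qf QB (v0 z)"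
      unfolding qf_CF KA_t KB_t qf_add by simp
    show "qf (C_F (PA + QA) (PB + QB) KA KB PAB) z \<le> qf BS z"
    proof (cases "w = 0 \<or> w = 1")
      case True
      then show ?thesis
      proof
        assume w: "w = 0"
        have "u0 z = 0" unfolding u0_def using w by simp
        then have v: "v0 z = z" using uv0[of z] by simp
        have r: "qf RB z = qf PB z + qf QB z" unfolding RB_def qf_add qf_scale using w by simp
        show ?thesis unfolding e end0[OF w] r using \<open>u0 z = 0\<close> v by (simp add: qf_def)
      next
        assume w: "w = 1"
        have "v0 z = 0" unfolding v0_def using w by simp
        then have v: "u0 z = z" using uv0[of z] by simp
        have r: "qf RA z = qf PA z + qf QA z" unfolding RA_def qf_add qf_scale using w by simp
        show ?thesis unfolding e end1[OF w] r using \<open>v0 z = 0\<close> v by (simp add: qf_def)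
      qed
    next
      case False
      then have w: "0 < w" "w < 1" using w0 w1 by auto
      define a where "a = qf PA (u0 z)"
      define b where "b = qf PB (v0 z)"
      define X where "X = u0 z \<bullet> (PAB *v v0 z)"
      have "0 \<le> qf PA ((1 - w) *\<^sub>R u0 z) + 2 * (((1 - w) *\<^sub>R u0 z) \<bullet> (PAB *v ((- w) *\<^sub>R v0 z)))
              + qf PB ((- w) *\<^sub>R v0 z)"
        by (rule split_ineq[OF PAB])
      moreover have "((1 - w) *\<^sub>R u0 z) \<bullet> (PAB *v ((- w) *\<^sub>R v0 z)) = - (w * (1 - w)) * X"
        unfolding X_def by (simp add: matrix_vector_mult_scaleR mv_neg algebra_simps)
      ultimately have h: "2 * (w * (1 - w)) * X \<le> (1 - w)^2 * a + w^2 * b"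
        unfolding qf_scaleR_vec a_def b_def by (simp add: algebra_simps)
      have ww: "0 < w * (1 - w)" using w by simp
      have "2 * X \<le> ((1 - w) / w) * a + (w / (1 - w)) * b"
      proof -
        have "((1 - w) / w) * a + (w / (1 - w)) * b = ((1 - w)^2 * a + w^2 * b) / (w * (1 - w))"
          using w by (simp add: field_simps power2_eq_square)
        moreover have "2 * X \<le> ((1 - w)^2 * a + w^2 * b) / (w * (1 - w))"
          using h ww by (simp add: pos_le_divide_eq mult_ac)
        ultimately show ?thesis by simp
      qed
      then have "qf (C_F (PA + QA) (PB + QB) KA KB PAB) z \<le>
          (1 / w) * a + qf QA (u0 z) + (1 / (1 - w)) * b + qf QB (v0 z)"
        unfolding e a_def[symmetric] b_def[symmetric] X_def[symmetric] using w
        by (simp add: field_simps)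
      also have "\<dots> = (1 / w) * qf RA (u0 z) + (1 / (1 - w)) * qf RB (v0 z)"
        unfolding RA_def RB_def qf_add qf_scale a_def b_def using w by (simp add: field_simps)
      also have "\<dots> = u0 z \<bullet> g z + v0 z \<bullet> g z"
        unfolding qf_def RA_u0 RB_v0 using w by simp
      also have "\<dots> = qf BS z" using uv0[of z] qfB by (metis inner_add_left)
      finally show ?thesis .
    qed
  qed
qed

end



lemma dominance:
  assumes pA: "pd PA" and pB: "pd PB" and qA: "pd QA" and qB: "pd QB"
    and cons: "conservative_fusion PA PB (PA + QA) (PB + QB) KA KB BF"
  shows "\<exists>w\<in>{0..1}. loewner_le (B_SCI PA PB QA QB w) BF"
proof -
  define MA where "MA = KA ** PA ** transpose KA"
  define MB where "MB = KB ** PB ** transpose KB"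
  define Dm where "Dm = BF - KA ** QA ** transpose KA - KB ** QB ** transpose KB"
  define u where "u z = transpose KA *v z" for z
  define v where "v z = transpose KB *v z" for z
  have Ksum: "KA + KB = mat 1" and symBF: "sym_mat BF" using cons unfolding conservative_fusion_def by auto
  have uv: "u z + v z = z" for z
  proof -
    have "u z + v z = transpose (KA + KB) *v z"
      unfolding u_def v_def transpose_add by (simp add: matrix_vector_mult_add_rdistrib)
    then show ?thesis using Ksum by simp
  qed
  have qMA: "qf MA z = qf PA (u z)" for z unfolding MA_def u_def by (rule qf_conj)
  have qMB: "qf MB z = qf PB (v z)" for z unfolding MB_def v_def by (rule qf_conj)
  have qD: "qf Dm z = qf BF z - qf QA (u z) - qf QB (v z)" for z
    unfolding Dm_def qf_diff u_def v_def qf_conj ..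
  have pw: "qf PA (u z) + qf QA (u z) + qf PB (v z) + qf QB (v z)
     + 2 * sqrt (qf PA (u z) * qf PB (v z)) \<le> qf BF z" for z
    unfolding u_def v_def by (rule pointwise[OF pA pB qA qB cons])
  obtain w where w: "w \<in> {0..1}" and fo: "\<And>z. 0 \<le> fo (qf MA z) (qf MB z) (qf Dm z) w"
  proof -
    have "\<exists>w\<in>{0..1}. \<forall>z. 0 \<le> fo (qf MA z) (qf MB z) (qf Dm z) w"
    proof (rule common_omega)
      show "\<forall>z. 0 \<le> qf MA z" unfolding qMA using pA pd_qf by blast
      show "\<forall>z. 0 \<le> qf MB z" unfolding qMB using pB pd_qf by blast
      show "\<forall>z. z \<noteq> 0 \<longrightarrow> 0 < qf MA z + qf MB z"
      proof (intro allI impI)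
        fix z :: "real^'a" assume z: "z \<noteq> 0"
        have "u z \<noteq> 0 \<or> v z \<noteq> 0" using uv[of z] z by auto
        then show "0 < qf MA z + qf MB z" unfolding qMA qMB
          using pd_qf_pos[OF pA] pd_qf_pos[OF pB] pd_qf[OF pA] pd_qf[OF pB]
          by (meson add_nonneg_pos add_pos_nonneg)
      qed
      show "\<forall>z. qf MA z + qf MB z + 2 * sqrt (qf MA z * qf MB z) \<le> qf Dm z"
        unfolding qMA qMB qD using pw by (smt (verit))
    qed
    then show ?thesis using that by blast
  qed
  interpret s: sci PA PB QA QB w using pA pB qA qB w by unfold_locales auto
  have "loewner_le s.BS BF"
  proof (rule loewner_intro[OF s.BS_sym symBF])
    fix z
    have f: "0 \<le> w * (1 - w) * (qf BF z - qf QA (u z) - qf QB (v z)) - (1 - w) * qf PA (u z) - w * qf PB (v z)"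
      using fo[of z] unfolding fo_def qMA qMB qD .
    show "qf s.BS z \<le> qf BF z"
    proof (cases "w = 0 \<or> w = 1")
      case True
      then show ?thesis
      proof
        assume w0: "w = 0"
        have "qf PA (u z) = 0" using f w0 pd_qf[OF pA, of "u z"] by simp
        then have "u z = 0" using pd_qf_zero[OF pA] by blast
        then have vz: "v z = z" using uv[of z] by simp
        have "qf s.BS z = qf PB z + qf QB z"
          unfolding s.end0[OF w0] s.RB_def qf_add qf_scale using w0 by simp
        also have "\<dots> \<le> qf BF z" using pw[of z] \<open>u z = 0\<close> vz by (simp add: qf_def)
        finally show ?thesis .
      next
        assume w1: "w = 1"
        have "qf PB (v z) = 0" using f w1 pd_qf[OF pB, of "v z"] by simp
        then have "v z = 0" using pd_qf_zero[OF pB] by blast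
        then have uz: "u z = z" using uv[of z] by simp
        have "qf s.BS z = qf PA z + qf QA z"
          unfolding s.end1[OF w1] s.RA_def qf_add qf_scale using w1 by simp
        also have "\<dots> \<le> qf BF z" using pw[of z] \<open>v z = 0\<close> uz by (simp add: qf_def)
        finally show ?thesis .
      qed
    next
      case False
      then have wi: "0 < w" "w < 1" using w by auto
      define a where "a = qf PA (u z)"
      define b where "b = qf PB (v z)"
      define d where "d = qf BF z - qf QA (u z) - qf QB (v z)"
      have f': "(1 - w) * a + w * b \<le> w * (1 - w) * d" using f unfolding a_def b_def d_def by linarith
      have "a / w + b / (1 - w) = ((1 - w) * a + w * b) / (w * (1 - w))"
        using wi by (simp add: field_simps)
      also have "\<dots> \<le> d" using f' wi by (simp add: pos_divide_le_eq mult_ac)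
      finally have ad: "a / w + b / (1 - w) \<le> d" .
      have "qf s.BS z \<le> (1 / w) * qf s.RA (u z) + (1 / (1 - w)) * qf s.RB (v z)"
        by (rule s.lower_mid[OF wi uv])
      also have "\<dots> = a / w + qf QA (u z) + b / (1 - w) + qf QB (v z)"
        unfolding s.RA_def s.RB_def qf_add qf_scale a_def b_def using wi by (simp add: field_simps)
      also have "\<dots> \<le> qf BF z" using ad unfolding d_def by linarith
      finally show ?thesis .
    qed
  qed
  then have "loewner_le (B_SCI PA PB QA QB w) BF" using s.B_eq by simp
  then show ?thesis using w by blast
qed

theorem corollary1:
  fixes PA PB QA QB :: "real ^ 'n ^ 'n" and J :: "real ^ 'n ^ 'n \<Rightarrow> real" and \<omega>s :: real
  assumes "pd PA" and "pd PB" and "pd QA" and "pd QB"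
    and "increasing_cost J"
    and "\<omega>s \<in> {0..1}"
    and "\<forall>\<omega> \<in> {0..1}. J (B_SCI PA PB QA QB \<omega>s) \<le> J (B_SCI PA PB QA QB \<omega>)"
  shows "conservative_fusion PA PB (PA + QA) (PB + QB)
           (\<omega>s *\<^sub>R (B_SCI PA PB QA QB \<omega>s ** matrix_inv (PA + \<omega>s *\<^sub>R QA)))
           ((1 - \<omega>s) *\<^sub>R (B_SCI PA PB QA QB \<omega>s ** matrix_inv (PB + (1 - \<omega>s) *\<^sub>R QB)))
           (B_SCI PA PB QA QB \<omega>s)
       \<and> (\<forall>KA KB BF. conservative_fusion PA PB (PA + QA) (PB + QB) KA KB BF
           \<longrightarrow> J (B_SCI PA PB QA QB \<omega>s) \<le> J BF)"
proof
  interpret s: sci PA PB QA QB \<omega>s using assms by unfold_locales auto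
  show "conservative_fusion PA PB (PA + QA) (PB + QB)
           (\<omega>s *\<^sub>R (B_SCI PA PB QA QB \<omega>s ** matrix_inv (PA + \<omega>s *\<^sub>R QA)))
           ((1 - \<omega>s) *\<^sub>R (B_SCI PA PB QA QB \<omega>s ** matrix_inv (PB + (1 - \<omega>s) *\<^sub>R QB)))
           (B_SCI PA PB QA QB \<omega>s)"
    using s.sci_conservative unfolding s.KA_def s.KB_def s.B_eq s.RA_def s.RB_def .
  show "\<forall>KA KB BF. conservative_fusion PA PB (PA + QA) (PB + QB) KA KB BF
           \<longrightarrow> J (B_SCI PA PB QA QB \<omega>s) \<le> J BF"
  proof (intro allI impI)
    fix KA KB BF assume c: "conservative_fusion PA PB (PA + QA) (PB + QB) KA KB BF"
    obtain w where w: "w \<in> {0..1}" and le: "loewner_le (B_SCI PA PB QA QB w) BF"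
      using dominance[OF assms(1-4) c] by blast
    interpret t: sci PA PB QA QB w using assms w by unfold_locales auto
    have "sym_mat (B_SCI PA PB QA QB w)" using t.BS_sym t.B_eq by simp
    moreover have "sym_mat BF" using c unfolding conservative_fusion_def by simp
    ultimately have "J (B_SCI PA PB QA QB w) \<le> J BF"
      using le assms(5) unfolding increasing_cost_def by blast
    moreover have "J (B_SCI PA PB QA QB \<omega>s) \<le> J (B_SCI PA PB QA QB w)" using assms(7) w by blast
    ultimately show "J (B_SCI PA PB QA QB \<omega>s) \<le> J BF" by linarith
  qed
qed

end
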